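(* For all $k,r\ge 0$, every graph in $M^k_r$ is connected and has diameter at most $2^r$.
   Context: Colors are red, blue, green. A $k$-precolored graph is a finite graph together with an assignment of colors to at most $k$ of its vertices. The game $\mathcal{G}^k_r(H)$ on a $k$-precolored graph $H$ starts from the given precoloring and lasts $r$ rounds; in each round Spoiler may erase the colors of some currently colored vertices and then selects a vertex, which Duplicator colors with one of the three colors; after each round at most $k$ vertices may be colored. Duplicator wins if the initial partial coloring and the partial coloring after each round are proper; otherwise Spoiler wins. A subgraph $H'$ of a $k$-precolored graph $H$ is a subgraph of the underlying graph in which every vertex colored in $H'$ has the same color in $H$ (vertices colored in $H$ may be uncolored in $H'$); it is proper if $H'\ne H$ as precolored graphs. $M^k_r$ is the family of all $k$-precolored graphs $H$ such that Spoiler has a winning strategy in $\mathcal{G}^k_r(H)$ while Duplicator has a winning strategy in $\mathcal{G}^k_r(K)$ for every proper subgraph $K$ of $H$. *)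

theory Defs
  imports Main
begin

datatype color = Red | Blue | Green

record 'a pcgraph =
  verts :: "'a set"
  edges :: "('a \<times> 'a) set"
  pcol  :: "'a \<Rightarrow> color option"

definition is_graph :: "'a pcgraph \<Rightarrow> bool" where
  "is_graph H \<longleftrightarrow> finite (verts H) \<and> edges H \<subseteq> verts H \<times> verts H
     \<and> sym (edges H) \<and> irrefl (edges H) \<and> dom (pcol H) \<subseteq> verts H"

definition k_precolored :: "nat \<Rightarrow> 'a pcgraph \<Rightarrow> bool" where
  "k_precolored k H \<longleftrightarrow> is_graph H \<and> card (dom (pcol H)) \<le> k"

definition proper_col :: "('a \<times> 'a) set \<Rightarrow> ('a \<Rightarrow> color option) \<Rightarrow> bool" where
  "proper_col E p \<longleftrightarrow> (\<forall>(u,v)\<in>E. \<forall>a b. p u = Some a \<longrightarrow> p v = Some b \<longrightarrow> a \<noteq> b)"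

text \<open>A legal Spoiler move from partial coloring p: erase some colors (obtaining
  q below p as a map), then select a vertex v, such that after Duplicator colors v
  at most k vertices are colored.\<close>
definition legal_move :: "nat \<Rightarrow> 'a set \<Rightarrow> ('a \<Rightarrow> color option) \<Rightarrow> ('a \<Rightarrow> color option) \<Rightarrow> 'a \<Rightarrow> bool" where
  "legal_move k V p q v \<longleftrightarrow> q \<subseteq>\<^sub>m p \<and> v \<in> V \<and> card (insert v (dom q)) \<le> k"

fun spoiler_wins :: "nat \<Rightarrow> nat \<Rightarrow> 'a set \<Rightarrow> ('a \<times> 'a) set \<Rightarrow> ('a \<Rightarrow> color option) \<Rightarrow> bool" where
  "spoiler_wins k 0 V E p = (\<not> proper_col E p)"
| "spoiler_wins k (Suc r) V E p = (\<not> proper_col E p \<or>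
     (\<exists>q v. legal_move k V p q v \<and> (\<forall>c. spoiler_wins k r V E (q(v \<mapsto> c)))))"

definition spoiler_wins_game :: "nat \<Rightarrow> nat \<Rightarrow> 'a pcgraph \<Rightarrow> bool" where
  "spoiler_wins_game k r H = spoiler_wins k r (verts H) (edges H) (pcol H)"

definition pc_subgraph :: "'a pcgraph \<Rightarrow> 'a pcgraph \<Rightarrow> bool" where
  "pc_subgraph K H \<longleftrightarrow> is_graph K \<and> verts K \<subseteq> verts H \<and> edges K \<subseteq> edges H
     \<and> pcol K \<subseteq>\<^sub>m pcol H"

definition M :: "nat \<Rightarrow> nat \<Rightarrow> 'a pcgraph set" where
  "M k r = {H. k_precolored k H \<and> spoiler_wins_game k r H \<and>
     (\<forall>K. pc_subgraph K H \<and> K \<noteq> H \<longrightarrow> \<not> spoiler_wins_game k r K)}"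

definition walk :: "'a pcgraph \<Rightarrow> 'a list \<Rightarrow> bool" where
  "walk H xs \<longleftrightarrow> xs \<noteq> [] \<and> set xs \<subseteq> verts H \<and>
     (\<forall>i. Suc i < length xs \<longrightarrow> (xs ! i, xs ! Suc i) \<in> edges H)"

definition connected_pc :: "'a pcgraph \<Rightarrow> bool" where
  "connected_pc H \<longleftrightarrow> (\<forall>u\<in>verts H. \<forall>v\<in>verts H.
     \<exists>xs. walk H xs \<and> hd xs = u \<and> last xs = v)"

definition diam_le :: "'a pcgraph \<Rightarrow> nat \<Rightarrow> bool" where
  "diam_le H d \<longleftrightarrow> (\<forall>u\<in>verts H. \<forall>v\<in>verts H.
     \<exists>xs. walk H xs \<and> hd xs = u \<and> last xs = v \<and> length xs \<le> Suc d)"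

end

theory Submission
  imports Defs
begin

lemma walk_single: "walk H [x] \<longleftrightarrow> x \<in> verts H"
  unfolding walk_def by auto

lemma walk_Cons2: "walk H (x # y # xs) \<longleftrightarrow> x \<in> verts H \<and> (x,y) \<in> edges H \<and> walk H (y#xs)"
  unfolding walk_def
  apply (rule iffI)
   apply (auto simp: nth_Cons split: nat.splits)
  done

lemma walk_mono: "walk H xs \<Longrightarrow> verts H \<subseteq> verts H' \<Longrightarrow> edges H \<subseteq> edges H' \<Longrightarrow> walk H' xs"
  unfolding walk_def by blast

lemma walk_append: "walk H xs \<Longrightarrow> walk H ys \<Longrightarrow> last xs = hd ys \<Longrightarrow> walk H (xs @ tl ys)"
proof (induction xs)
  case Nil
  then show ?case by (simp add: walk_def)
next
  case (Cons x xs)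
  show ?case
  proof (cases xs)
    case Nil
    then show ?thesis using Cons.prems by (cases ys) auto
  next
    case (Cons y zs)
    have w: "walk H xs" using Cons.prems(1) \<open>xs = y # zs\<close> walk_Cons2 by metis
    have "walk H (xs @ tl ys)" using Cons.IH[OF w Cons.prems(2)] Cons.prems(3) \<open>xs = y # zs\<close> by simp
    then show ?thesis using Cons.prems(1) \<open>xs = y # zs\<close> by (simp add: walk_Cons2)
  qed
qed

lemma improper_mono: "\<not> proper_col E p \<Longrightarrow> E \<subseteq> E' \<Longrightarrow> p \<subseteq>\<^sub>m p' \<Longrightarrow> \<not> proper_col E' p'"
proof -
  assume a: "\<not> proper_col E p" "E \<subseteq> E'" "p \<subseteq>\<^sub>m p'"
  then obtain u v x where "(u,v) \<in> E" "p u = Some x" "p v = Some x"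
    unfolding proper_col_def by auto
  moreover have "\<And>w y. p w = Some y \<Longrightarrow> p' w = Some y"
    using a(3) unfolding map_le_def by (metis domI)
  ultimately show ?thesis using a(2) unfolding proper_col_def by blast
qed

lemma sw_mono: "spoiler_wins k r V E p \<Longrightarrow> V \<subseteq> V' \<Longrightarrow> E \<subseteq> E' \<Longrightarrow> p \<subseteq>\<^sub>m p'
   \<Longrightarrow> spoiler_wins k r V' E' p'"
proof (induction r arbitrary: p p')
  case 0
  then show ?case using improper_mono[of E p E' p'] by simp
next
  case (Suc r)
  show ?case
  proof (cases "proper_col E p")
    case False
    have "\<not> proper_col E' p'" using improper_mono False Suc.prems by blast
    then show ?thesis by simp
  next
    case True
    then obtain q v where m: "legal_move k V p q v" and w: "\<forall>c. spoiler_wins k r V E (q(v \<mapsto> c))"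
      using Suc.prems(1) by auto
    have "legal_move k V' p' q v" using m Suc.prems map_le_trans unfolding legal_move_def by blast
    moreover have "\<forall>c. spoiler_wins k r V' E' (q(v \<mapsto> c))"
      using w Suc.IH Suc.prems map_le_refl by blast
    ultimately show ?thesis by auto
  qed
qed

lemma improper_wins: "\<not> proper_col E p \<Longrightarrow> spoiler_wins k r V E p"
  by (cases r) auto

lemma sw_Suc: "spoiler_wins k r V E p \<Longrightarrow> spoiler_wins k (Suc r) V E p"
proof (induction r arbitrary: p)
  case 0
  then show ?case by auto
next
  case (Suc r)
  then show ?case by (metis spoiler_wins.simps(2))
qed

lemma sw_le: "r \<le> s \<Longrightarrow> spoiler_wins k r V E p \<Longrightarrow> spoiler_wins k s V E p"
  by (induction s rule: dec_induct) (simp, blast intro: sw_Suc)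

lemma diam_mono: "diam_le H d \<Longrightarrow> d \<le> d' \<Longrightarrow> diam_le H d'"
  unfolding diam_le_def by (meson Suc_le_mono le_trans)

definition good where
  "good k r V E p K \<longleftrightarrow> is_graph K \<and> verts K \<subseteq> V \<and> edges K \<subseteq> E \<and> pcol K \<subseteq>\<^sub>m p
     \<and> spoiler_wins k r (verts K) (edges K) (pcol K) \<and> diam_le K (2^r)"

lemma improper_case:
  assumes "\<not> proper_col E p" "irrefl E" "E \<subseteq> V \<times> V" "sym E"
  shows "\<exists>K. good k r V E p K"
proof -
  obtain a b x where ab: "(a,b) \<in> E" "p a = Some x" "p b = Some x"
    using assms(1) unfolding proper_col_def by auto
  have "a \<noteq> b" using ab(1) assms(2) unfolding irrefl_def by auto
  define K :: "'a pcgraph" where "K = \<lparr>verts = {a,b}, edges = {(a,b),(b,a)}, pcol = p |` {a,b}\<rparr>"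
  have g: "is_graph K" unfolding K_def is_graph_def sym_def irrefl_def using \<open>a \<noteq> b\<close>
    by auto
  have np: "\<not> proper_col (edges K) (pcol K)" unfolding K_def proper_col_def using ab by auto
  have d: "diam_le K (2^r)"
    unfolding diam_le_def
  proof (intro ballI)
    fix u w assume u: "u \<in> verts K" and w: "w \<in> verts K"
    show "\<exists>xs. walk K xs \<and> hd xs = u \<and> last xs = w \<and> length xs \<le> Suc (2 ^ r)"
    proof (cases "u = w")
      case True
      then show ?thesis using u by (intro exI[of _ "[u]"]) (simp add: walk_single)
    next
      case False
      have "(u,w) \<in> edges K" using u w False unfolding K_def by auto
      then have "walk K [u,w]" using u w by (simp add: walk_Cons2 walk_single)
      moreover have "(2::nat) \<le> Suc (2^r)" by simp
      ultimately show ?thesis by (intro exI[of _ "[u,w]"]) simp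
    qed
  qed
  have "pcol K \<subseteq>\<^sub>m p" unfolding K_def map_le_def by auto
  moreover have "verts K \<subseteq> V" "edges K \<subseteq> E"
    using ab(1) assms(3,4) unfolding K_def sym_def by auto
  ultimately show ?thesis unfolding good_def using g np d improper_wins by blast
qed

lemma main:
  assumes "spoiler_wins k r V E p" "finite V" "E \<subseteq> V \<times> V" "sym E" "irrefl E" "dom p \<subseteq> V"
  shows "\<exists>K. good k r V E p K"
  using assms
proof (induction r arbitrary: p)
  case 0
  then show ?case using improper_case by auto
next
  case (Suc r)
  show ?case
  proof (cases "proper_col E p")
    case False
    then show ?thesis using improper_case Suc.prems by blast
  next
    case True
    then obtain q v where m: "legal_move k V p q v" and w: "\<forall>c. spoiler_wins k r V E (q(v \<mapsto> c))"
      using Suc.prems(1) by auto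
    have qp: "q \<subseteq>\<^sub>m p" and vV: "v \<in> V" and cardk: "card (insert v (dom q)) \<le> k"
      using m unfolding legal_move_def by auto
    have domq: "dom q \<subseteq> V" using qp Suc.prems(6) map_le_implies_dom_le by blast
    have "\<forall>c. \<exists>K. good k r V E (q(v \<mapsto> c)) K"
    proof
      fix c
      have "dom (q(v \<mapsto> c)) \<subseteq> V" using domq vV by auto
      then show "\<exists>K. good k r V E (q(v \<mapsto> c)) K"
        using Suc.IH[OF w[rule_format, of c] Suc.prems(2-5)] by blast
    qed
    then obtain Kf where Kf: "\<And>c. good k r V E (q(v \<mapsto> c)) (Kf c)" by metis
    show ?thesis
    proof (cases "\<exists>c. v \<notin> verts (Kf c)")
      case True
      then obtain c where c: "v \<notin> verts (Kf c)" by blast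
      have G: "is_graph (Kf c)" "verts (Kf c) \<subseteq> V" "edges (Kf c) \<subseteq> E"
        "pcol (Kf c) \<subseteq>\<^sub>m q(v \<mapsto> c)"
        "spoiler_wins k r (verts (Kf c)) (edges (Kf c)) (pcol (Kf c))" "diam_le (Kf c) (2^r)"
        using Kf[of c] unfolding good_def by auto
      have "dom (pcol (Kf c)) \<subseteq> verts (Kf c)" using G(1) unfolding is_graph_def by auto
      then have "pcol (Kf c) \<subseteq>\<^sub>m q" unfolding map_le_def
      proof (intro ballI)
        fix a assume "dom (pcol (Kf c)) \<subseteq> verts (Kf c)" and a: "a \<in> dom (pcol (Kf c))"
        then have "a \<noteq> v" using c by blast
        have "pcol (Kf c) a = (q(v \<mapsto> c)) a" using G(4) a unfolding map_le_def by blast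
        then show "pcol (Kf c) a = q a" using \<open>a \<noteq> v\<close> by simp
      qed
      then have "pcol (Kf c) \<subseteq>\<^sub>m p" using qp map_le_trans by blast
      moreover have "spoiler_wins k (Suc r) (verts (Kf c)) (edges (Kf c)) (pcol (Kf c))"
        using G(5) sw_Suc by blast
      moreover have "diam_le (Kf c) (2^Suc r)"
        using G(6) diam_mono[of "Kf c" "2^r" "2^Suc r"] by simp
      ultimately show ?thesis using G unfolding good_def by blast
    next
      case False
      then have vin: "\<And>c. v \<in> verts (Kf c)" by blast
      define VK where "VK = (\<Union>c. verts (Kf c))"
      define EK where "EK = (\<Union>c. edges (Kf c))"
      define K :: "'a pcgraph" where "K = \<lparr>verts = VK, edges = EK, pcol = q |` VK\<rparr>"
      have G: "\<And>c. is_graph (Kf c)" "\<And>c. verts (Kf c) \<subseteq> V" "\<And>c. edges (Kf c) \<subseteq> E"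
        "\<And>c. pcol (Kf c) \<subseteq>\<^sub>m q(v \<mapsto> c)"
        "\<And>c. spoiler_wins k r (verts (Kf c)) (edges (Kf c)) (pcol (Kf c))" "\<And>c. diam_le (Kf c) (2^r)"
        using Kf unfolding good_def by auto
      have UNIVc: "(UNIV :: color set) = {Red, Blue, Green}" using color.exhaust by blast
      have VKV: "VK \<subseteq> V" using G(2) unfolding VK_def by blast
      have EKE: "EK \<subseteq> E" using G(3) unfolding EK_def by blast
      have finVK: "finite VK" using VKV Suc.prems(2) finite_subset by blast
      have gK: "is_graph K"
        unfolding K_def is_graph_def
      proof (simp only: pcgraph.simps, intro conjI)
        show "finite VK" by (rule finVK)
        show "EK \<subseteq> VK \<times> VK"
        proof
          fix e assume "e \<in> EK"
          then obtain c where "e \<in> edges (Kf c)" unfolding EK_def by blast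
          moreover have "edges (Kf c) \<subseteq> verts (Kf c) \<times> verts (Kf c)"
            using G(1)[of c] unfolding is_graph_def by blast
          moreover have "verts (Kf c) \<subseteq> VK" unfolding VK_def by blast
          ultimately show "e \<in> VK \<times> VK" by blast
        qed
        show "sym EK"
        proof (rule symI)
          fix a b assume "(a, b) \<in> EK"
          then obtain c where "(a, b) \<in> edges (Kf c)" unfolding EK_def by blast
          moreover have "sym (edges (Kf c))" using G(1)[of c] unfolding is_graph_def by blast
          ultimately have "(b, a) \<in> edges (Kf c)" by (rule symD[rotated])
          then show "(b, a) \<in> EK" unfolding EK_def by blast
        qed
        show "irrefl EK"
        proof (rule irreflI)
          fix a show "(a, a) \<notin> EK"
          proof
            assume "(a, a) \<in> EK"
            then obtain c where "(a, a) \<in> edges (Kf c)" unfolding EK_def by blast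
            moreover have "irrefl (edges (Kf c))" using G(1)[of c] unfolding is_graph_def by blast
            ultimately show False unfolding irrefl_def by blast
          qed
        qed
        show "dom (q |` VK) \<subseteq> VK" by auto
      qed
      have pK: "pcol K \<subseteq>\<^sub>m p" using qp unfolding K_def map_le_def by (auto simp: restrict_map_def)
      have vVK: "v \<in> VK" using vin unfolding VK_def by blast
      have "q |` VK \<subseteq>\<^sub>m p" using qp unfolding map_le_def by (auto simp: restrict_map_def)
      then have props: "proper_col EK (q |` VK)"
        using True EKE improper_mono by blast
      have lm: "legal_move k VK (q |` VK) (q |` VK) v"
        unfolding legal_move_def
      proof (intro conjI)
        have fi: "finite (insert v (dom q))" using domq Suc.prems(2) finite_subset by blast
        have "insert v (dom (q |` VK)) \<subseteq> insert v (dom q)" by auto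
        then have "card (insert v (dom (q |` VK))) \<le> card (insert v (dom q))"
          using card_mono fi by blast
        then show "card (insert v (dom (q |` VK))) \<le> k" using cardk by linarith
      qed (auto simp: vVK)
      have cont: "\<forall>c. spoiler_wins k r VK EK ((q |` VK)(v \<mapsto> c))"
      proof
        fix c
        have "dom (pcol (Kf c)) \<subseteq> verts (Kf c)" using G(1) unfolding is_graph_def by auto
        then have "pcol (Kf c) \<subseteq>\<^sub>m (q |` VK)(v \<mapsto> c)" unfolding map_le_def
        proof (intro ballI)
          fix a assume "dom (pcol (Kf c)) \<subseteq> verts (Kf c)" and a: "a \<in> dom (pcol (Kf c))"
          then have aV: "a \<in> VK" unfolding VK_def by blast
          have e: "pcol (Kf c) a = (q(v \<mapsto> c)) a" using G(4)[of c] a unfolding map_le_def by blast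
          show "pcol (Kf c) a = ((q |` VK)(v \<mapsto> c)) a"
          proof (cases "a = v")
            case True then show ?thesis using e by simp
          next
            case False then show ?thesis using e aV by simp
          qed
        qed
        moreover have "verts (Kf c) \<subseteq> VK" "edges (Kf c) \<subseteq> EK" unfolding VK_def EK_def by auto
        ultimately show "spoiler_wins k r VK EK ((q |` VK)(v \<mapsto> c))"
          using sw_mono G(5) by blast
      qed
      have swK: "spoiler_wins k (Suc r) (verts K) (edges K) (pcol K)"
        using props lm cont unfolding K_def by auto
      have walkK: "\<And>c xs. walk (Kf c) xs \<Longrightarrow> walk K xs"
      proof -
        fix c xs assume "walk (Kf c) xs"
        moreover have "verts (Kf c) \<subseteq> verts K" unfolding K_def VK_def by auto
        moreover have "edges (Kf c) \<subseteq> edges K" unfolding K_def EK_def by auto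
        ultimately show "walk K xs" by (rule walk_mono)
      qed
      have dK: "diam_le K (2 ^ Suc r)"
        unfolding diam_le_def
      proof (intro ballI)
        fix a b assume a: "a \<in> verts K" and b: "b \<in> verts K"
        obtain c1 where c1: "a \<in> verts (Kf c1)" using a unfolding K_def VK_def by auto
        obtain c2 where c2: "b \<in> verts (Kf c2)" using b unfolding K_def VK_def by auto
        obtain xs where xs: "walk (Kf c1) xs" "hd xs = a" "last xs = v" "length xs \<le> Suc (2^r)"
          using G(6)[of c1] c1 vin unfolding diam_le_def by blast
        obtain ys where ys: "walk (Kf c2) ys" "hd ys = v" "last ys = b" "length ys \<le> Suc (2^r)"
          using G(6)[of c2] c2 vin unfolding diam_le_def by blast
        have ne: "xs \<noteq> []" "ys \<noteq> []" using xs(1) ys(1) unfolding walk_def by auto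
        have "walk K (xs @ tl ys)" using walk_append[OF walkK[OF xs(1)] walkK[OF ys(1)]] xs ys by simp
        moreover have "hd (xs @ tl ys) = a" using xs ne by simp
        moreover have "last (xs @ tl ys) = b"
          using xs ys ne by (cases ys) (auto simp: last_append)
        moreover have "length (xs @ tl ys) \<le> Suc (2 ^ Suc r)" using xs ys by auto
        ultimately show "\<exists>zs. walk K zs \<and> hd zs = a \<and> last zs = b \<and> length zs \<le> Suc (2 ^ Suc r)"
          by blast
      qed
      have "verts K \<subseteq> V" "edges K \<subseteq> E" using VKV EKE unfolding K_def by auto
      then show ?thesis unfolding good_def using gK pK swK dK by blast
    qed
  qed
qed

theorem lemma6:
  fixes k r :: nat and H :: "'a pcgraph"
  assumes "H \<in> M k r"
  shows "connected_pc H \<and> diam_le H (2 ^ r)"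
proof -
  have kp: "k_precolored k H" and sw: "spoiler_wins_game k r H"
    and mn: "\<And>K. pc_subgraph K H \<and> K \<noteq> H \<Longrightarrow> \<not> spoiler_wins_game k r K"
    using assms unfolding M_def by auto
  have g: "is_graph H" using kp unfolding k_precolored_def by auto
  obtain K where K: "good k r (verts H) (edges H) (pcol H) K"
    using main[of k r "verts H" "edges H" "pcol H"] sw g unfolding spoiler_wins_game_def is_graph_def
    by blast
  have "pc_subgraph K H" using K unfolding good_def pc_subgraph_def by auto
  moreover have "spoiler_wins_game k r K" using K unfolding good_def spoiler_wins_game_def by auto
  ultimately have "K = H" using mn by blast
  then have d: "diam_le H (2^r)" using K unfolding good_def by auto
  then have "connected_pc H" unfolding diam_le_def connected_pc_def by blast
  then show ?thesis using d by blast
qed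

end
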